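(* Let $\Phi$ be an $L$-layer ReLU network with weights $W^{(i)}\in\mathbb R^{N_{i-1}\times N_i}$, data $X\in\mathbb R^{m\times N_0}$, alphabet $\mathcal A=\mathcal A_\infty^\delta$, $p\in\mathbb N$, and $2\le i\le L$. Suppose the first $i-1$ layers have been quantized (by the same algorithm), and consider the quantization of layer $i$; probabilities below are conditional on the first $i-1$ layers. (a) If layer $i$ is quantized by Algorithm 1 (perfect data alignment), then with probability at least $1-\sqrt2\,mN_i/N_{i-1}^p$, $$\max_{1\le j\le N_i}\|X^{(i-1)}W^{(i)}_j-\widetilde X^{(i-1)}Q^{(i)}_j\|_2\le \delta\sqrt{2\pi pm\log N_{i-1}}\max_{1\le j\le N_{i-1}}\|X^{(i-1)}_j\|_2+\delta\sqrt{2\pi pm\log N_{i-1}}\max_{1\le j\le N_{i-1}}\|X^{(i-2)}W^{(i-1)}_j-\widetilde X^{(i-2)}Q^{(i-1)}_j\|_2.$$ (b) If layer $i$ is quantized by Algorithm 2 (order-$r$ data alignment), then with probability at least $1-\sqrt2\,mN_i/N_{i-1}^p$, $$\max_{1\le j\le N_i}\|X^{(i-1)}W^{(i)}_j-\widetilde X^{(i-1)}Q^{(i)}_j\|_2\le \delta\sqrt{2\pi pm\log N_{i-1}}\max_{j}\|X^{(i-1)}_j\|_2+\Bigl(N_{i-1}\|W^{(i)}\|_{\max}\|P^{(i-1)}\|_2^{r-1}+\delta\sqrt{2\pi pm\log N_{i-1}}\Bigr)\max_{1\le j\le N_{i-1}}\|X^{(i-2)}W^{(i-1)}_j-\widetilde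 X^{(i-2)}Q^{(i-1)}_j\|_2,$$ where $P^{(i-1)}:=P_{\widetilde X^{(i-1)\perp}_{N_{i-1}}}\cdots P_{\widetilde X^{(i-1)\perp}_{1}}$.
   Context: $\rho(x)=\max\{0,x\}$ acts entrywise. For data $X\in\mathbb R^{m\times N_0}$ (data points as rows): $X^{(0)}=X$, $X^{(i)}=\rho(X^{(i-1)}W^{(i)})$; for quantized weights $Q^{(i)}$: $\widetilde X^{(0)}=X$, $\widetilde X^{(i)}=\rho(\widetilde X^{(i-1)}Q^{(i)})$. $A_j$ is the $j$-th column of $A$, $\|A\|_{\max}=\max_{k,l}|A_{kl}|$; columns of $\widetilde X^{(i)}$ are assumed nonzero; $P_{z^\perp}=I-zz^\top/\|z\|_2^2$. $\mathcal A_\infty^\delta=\{k\delta:k\in\mathbb Z\}$; $\mathcal Q_{\mathrm{StocQ}}(z)$ equals $\lfloor z/\delta\rfloor\delta$ with probability $1-z/\delta+\lfloor z/\delta\rfloor$ and $(\lfloor z/\delta\rfloor+1)\delta$ otherwise, with fresh independent randomness at each call. Phase II for a vector $\widetilde w\in\mathbb R^{N}$ and data $\widetilde Y\in\mathbb R^{m\times N}$: $\widetilde u_0=0$, $\widetilde q_t=\mathcal Q_{\mathrm{StocQ}}(\widetilde w_t+\langle\widetilde Y_t,\widetilde u_{t-1}\rangle/\|\widetilde Y_t\|_2^2)$, $\widetilde u_t=\widetilde u_{t-1}+(\widetilde w_t-\widetilde q_t)\widetilde Y_t$, $t=1,\dots,N$. Perfect alignment: given $Y,\widetilde Y,w$,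 $\widetilde w$ is a minimizer of $\|z\|_\infty$ subject to $\widetilde Yz=Yw$ (assumed feasible). Order-$r$ alignment: $\hat u_0=0$; for $t=1,\dots,N$, $\widetilde w_t=\langle\widetilde Y_t,\hat u_{t-1}+w_tY_t\rangle/\|\widetilde Y_t\|_2^2$, $\hat u_t=\hat u_{t-1}+w_tY_t-\widetilde w_t\widetilde Y_t$; for $t=N+1,\dots,rN$ (indices of $w,\widetilde w,Y,\widetilde Y$ mod $N$), $\hat v_{t-1}=\hat u_{t-1}-w_tY_t+\widetilde w_t\widetilde Y_t$, $\widetilde w_t\leftarrow\langle\widetilde Y_t,\hat v_{t-1}+w_tY_t\rangle/\|\widetilde Y_t\|_2^2$, $\hat u_t=\hat v_{t-1}+w_tY_t-\widetilde w_t\widetilde Y_t$. Algorithm 1: for $i=1,\dots,L$, with $Y=X^{(i-1)},\widetilde Y=\widetilde X^{(i-1)}$, for each column $w=W^{(i)}_j$ compute $\widetilde w$ by perfect alignment, run Phase II on $\widetilde w$ with data $\widetilde Y$, and set $Q^{(i)}_j=\widetilde q$. Algorithm 2: the same with order-$r$ alignment in place of perfect alignment. *)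

theory Defs
  imports "HOL-Probability.Probability"
begin

text \<open>Vectors and matrices are represented as functions on natural-number indices
  (0-based); the relevant dimensions are always passed explicitly and only
  entries with indices below these dimensions are ever used.\<close>

type_synonym vec = "nat \<Rightarrow> real"
type_synonym mat = "nat \<Rightarrow> nat \<Rightarrow> real"

definition relu :: "real \<Rightarrow> real" where
  "relu x = max 0 x"

definition col :: "mat \<Rightarrow> nat \<Rightarrow> vec" where
  "col A j = (\<lambda>a. A a j)"

definition inner_m :: "nat \<Rightarrow> vec \<Rightarrow> vec \<Rightarrow> real" where
  "inner_m m x y = (\<Sum>a<m. x a * y a)"

definition norm_m :: "nat \<Rightarrow> vec \<Rightarrow> real" where
  "norm_m m x = sqrt (\<Sum>a<m. (x a)^2)"

definition matvec :: "mat \<Rightarrow> vec \<Rightarrow> nat \<Rightarrow> vec" where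
  "matvec A z n = (\<lambda>a. \<Sum>k<n. A a k * z k)"

fun net :: "mat \<Rightarrow> (nat \<Rightarrow> mat) \<Rightarrow> (nat \<Rightarrow> nat) \<Rightarrow> nat \<Rightarrow> mat" where
  "net X W N 0 = X"
| "net X W N (Suc i) = (\<lambda>a b. relu (\<Sum>k<N i. net X W N i a k * W (Suc i) k b))"

definition stocq :: "real \<Rightarrow> real \<Rightarrow> real pmf" where
  "stocq \<delta> z = map_pmf (\<lambda>b. if b then (of_int \<lfloor>z/\<delta>\<rfloor> + 1) * \<delta> else of_int \<lfloor>z/\<delta>\<rfloor> * \<delta>)
                       (bernoulli_pmf (z/\<delta> - of_int \<lfloor>z/\<delta>\<rfloor>))"

fun phase2_state :: "real \<Rightarrow> vec \<Rightarrow> mat \<Rightarrow> nat \<Rightarrow> nat \<Rightarrow> (vec \<times> vec) pmf" where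
  "phase2_state \<delta> w Yt m 0 = return_pmf (\<lambda>_. 0, \<lambda>_. 0)"
| "phase2_state \<delta> w Yt m (Suc t) =
     bind_pmf (phase2_state \<delta> w Yt m t) (\<lambda>(q, u).
       bind_pmf (stocq \<delta> (w t + inner_m m (col Yt t) u / (norm_m m (col Yt t))^2)) (\<lambda>qt.
         return_pmf (q(t := qt), \<lambda>a. u a + (w t - qt) * Yt a t)))"

definition phase2 :: "real \<Rightarrow> vec \<Rightarrow> mat \<Rightarrow> nat \<Rightarrow> nat \<Rightarrow> vec pmf" where
  "phase2 \<delta> w Yt m n = map_pmf fst (phase2_state \<delta> w Yt m n)"

definition linf :: "nat \<Rightarrow> vec \<Rightarrow> real" where
  "linf n z = (MAX k\<in>{..<n}. \<bar>z k\<bar>)"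

definition perfect_align :: "nat \<Rightarrow> nat \<Rightarrow> mat \<Rightarrow> mat \<Rightarrow> vec \<Rightarrow> vec \<Rightarrow> bool" where
  "perfect_align m n Y Yt w z \<longleftrightarrow>
     (\<forall>a<m. matvec Yt z n a = matvec Y w n a) \<and>
     (\<forall>z'. (\<forall>a<m. matvec Yt z' n a = matvec Y w n a) \<longrightarrow> linf n z \<le> linf n z')"

definition ord_step :: "nat \<Rightarrow> nat \<Rightarrow> mat \<Rightarrow> mat \<Rightarrow> vec \<Rightarrow> nat \<Rightarrow> vec \<times> vec \<Rightarrow> vec \<times> vec" where
  "ord_step m n Y Yt w t st =
     (let (wt, u) = st; s = t mod n in
      if t < n then
        (let c = inner_m m (col Yt s) (\<lambda>a. u a + w s * Y a s) / (norm_m m (col Yt s))^2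
         in (wt(s := c), \<lambda>a. u a + w s * Y a s - c * Yt a s))
      else
        (let v = (\<lambda>a. u a - w s * Y a s + wt s * Yt a s);
             c = inner_m m (col Yt s) (\<lambda>a. v a + w s * Y a s) / (norm_m m (col Yt s))^2
         in (wt(s := c), \<lambda>a. v a + w s * Y a s - c * Yt a s)))"

fun ord_state :: "nat \<Rightarrow> nat \<Rightarrow> mat \<Rightarrow> mat \<Rightarrow> vec \<Rightarrow> nat \<Rightarrow> vec \<times> vec" where
  "ord_state m n Y Yt w 0 = (\<lambda>_. 0, \<lambda>_. 0)"
| "ord_state m n Y Yt w (Suc t) = ord_step m n Y Yt w t (ord_state m n Y Yt w t)"

definition order_r_align :: "nat \<Rightarrow> nat \<Rightarrow> nat \<Rightarrow> mat \<Rightarrow> mat \<Rightarrow> vec \<Rightarrow> vec" where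
  "order_r_align r m n Y Yt w = fst (ord_state m n Y Yt w (r * n))"

fun cols_pmf :: "(nat \<Rightarrow> vec pmf) \<Rightarrow> nat \<Rightarrow> (nat \<Rightarrow> vec) pmf" where
  "cols_pmf f 0 = return_pmf (\<lambda>_ _. 0)"
| "cols_pmf f (Suc n) = bind_pmf (cols_pmf f n) (\<lambda>C. bind_pmf (f n) (\<lambda>c. return_pmf (C(n := c))))"

definition mat_pmf :: "(nat \<Rightarrow> vec pmf) \<Rightarrow> nat \<Rightarrow> mat pmf" where
  "mat_pmf f n = map_pmf (\<lambda>C k j. C j k) (cols_pmf f n)"

definition col_err :: "nat \<Rightarrow> nat \<Rightarrow> mat \<Rightarrow> mat \<Rightarrow> mat \<Rightarrow> mat \<Rightarrow> nat \<Rightarrow> real" where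
  "col_err m n Y W Yt Q j = norm_m m (\<lambda>a. matvec Y (col W j) n a - matvec Yt (col Q j) n a)"

definition max_norm :: "nat \<Rightarrow> nat \<Rightarrow> mat \<Rightarrow> real" where
  "max_norm n1 n2 A = (MAX (k, j)\<in>{..<n1} \<times> {..<n2}. \<bar>A k j\<bar>)"

definition idm :: mat where
  "idm = (\<lambda>a b. if a = b then 1 else 0)"

definition matmul :: "nat \<Rightarrow> mat \<Rightarrow> mat \<Rightarrow> mat" where
  "matmul m A B = (\<lambda>a b. \<Sum>k<m. A a k * B k b)"

definition proj_perp :: "nat \<Rightarrow> vec \<Rightarrow> mat" where
  "proj_perp m z = (\<lambda>a b. idm a b - z a * z b / (norm_m m z)^2)"

fun proj_prod :: "nat \<Rightarrow> mat \<Rightarrow> nat \<Rightarrow> mat" where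
  "proj_prod m Yt 0 = idm"
| "proj_prod m Yt (Suc n) = matmul m (proj_perp m (col Yt n)) (proj_prod m Yt n)"

definition op_norm :: "nat \<Rightarrow> mat \<Rightarrow> real" where
  "op_norm m A = Sup {norm_m m (matvec A x m) | x. norm_m m x \<le> 1}"

end

theory Submission
  imports Defs
begin

lemma stocq_set:
  assumes "q \<in> set_pmf (stocq \<delta> z)"
  shows "q = (of_int \<lfloor>z/\<delta>\<rfloor> + 1) * \<delta> \<or> q = of_int \<lfloor>z/\<delta>\<rfloor> * \<delta>"
  using assms unfolding stocq_def by (auto split: if_splits)

lemma stocq_finite: "finite (set_pmf (stocq \<delta> z))"
  by (rule finite_subset[of _ "{(of_int \<lfloor>z/\<delta>\<rfloor> + 1) * \<delta>, of_int \<lfloor>z/\<delta>\<rfloor> * \<delta>}"])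
     (use stocq_set in blast, simp)

lemma stocq_mean:
  assumes "\<delta> > 0"
  shows "measure_pmf.expectation (stocq \<delta> z) (\<lambda>q. q) = z"
proof -
  define th where "th = z/\<delta> - of_int \<lfloor>z/\<delta>\<rfloor>"
  have th: "0 \<le> th" "th \<le> 1" unfolding th_def by linarith+
  show ?thesis
    unfolding stocq_def integral_map_pmf
    apply (subst integral_bernoulli_pmf)
    using th assms by (auto simp: th_def[symmetric] field_simps, simp add: th_def field_simps)
qed

lemma hoeff_pos:
  fixes g :: "real \<Rightarrow> real"
  assumes "l > 0" and "\<And>q. q \<in> set_pmf p \<Longrightarrow> g q \<in> {a..b}"
    and "measure_pmf.expectation p g = 0"
  shows "(\<integral>\<^sup>+q. ennreal (exp (l * g q)) \<partial>measure_pmf p) \<le> ennreal (exp (l^2 * (b-a)^2/8))"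
proof -
  interpret interval_bounded_random_variable "measure_pmf p" g a b
    by unfold_locales (auto simp: AE_measure_pmf_iff dest: assms(2))
  show ?thesis using Hoeffdings_lemma_nn_integral_0[OF assms(1) assms(3)] by simp
qed

lemma stocq_hoeff:
  assumes "\<delta> > 0"
  shows "(\<integral>\<^sup>+q. ennreal (exp (l * (z - q))) \<partial>measure_pmf (stocq \<delta> z)) \<le> ennreal (exp (l^2 * \<delta>^2/8))"
proof -
  define f where "f = real_of_int \<lfloor>z/\<delta>\<rfloor>"
  have fl: "f * \<delta> \<le> z" "z \<le> (f+1) * \<delta>"
  proof -
    have "f \<le> z/\<delta>" "z/\<delta> \<le> f + 1" unfolding f_def by linarith+
    thus "f * \<delta> \<le> z" "z \<le> (f+1) * \<delta>" using assms by (auto simp: field_simps)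
  qed
  have sq: "q = (f + 1) * \<delta> \<or> q = f * \<delta>" if "q \<in> set_pmf (stocq \<delta> z)" for q
    using stocq_set[OF that] unfolding f_def .
  have int: "integrable (measure_pmf (stocq \<delta> z)) (\<lambda>q. q)"
    by (rule integrable_measure_pmf_finite[OF stocq_finite])
  have E1: "measure_pmf.expectation (stocq \<delta> z) (\<lambda>q. z - q) = 0"
    using stocq_mean[OF assms, of z] int by (simp add: Bochner_Integration.integral_diff)
  have E2: "measure_pmf.expectation (stocq \<delta> z) (\<lambda>q. q - z) = 0"
    using stocq_mean[OF assms, of z] int by (simp add: Bochner_Integration.integral_diff)
  consider "l > 0" | "l < 0" | "l = 0" by linarith
  then show ?thesis
  proof cases
    case 1
    have "(\<integral>\<^sup>+q. ennreal (exp (l * (z - q))) \<partial>measure_pmf (stocq \<delta> z))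
        \<le> ennreal (exp (l^2 * ((z - f*\<delta>) - (z - (f+1)*\<delta>))^2/8))"
      by (rule hoeff_pos[OF 1 _ E1]) (use sq fl in fastforce)
    thus ?thesis by (simp add: algebra_simps)
  next
    case 2
    have "(\<integral>\<^sup>+q. ennreal (exp ((-l) * (q - z))) \<partial>measure_pmf (stocq \<delta> z))
        \<le> ennreal (exp ((-l)^2 * (((f+1)*\<delta> - z) - (f*\<delta> - z))^2/8))"
      by (rule hoeff_pos[OF _ _ E2]) (use sq fl 2 in fastforce)+
    thus ?thesis by (simp add: algebra_simps)
  next
    case 3
    thus ?thesis by (simp add: measure_pmf.emeasure_space_1)
  qed
qed

lemma sumsq_norm: "(norm_m m x)^2 = (\<Sum>a<m. (x a)^2)"
  unfolding norm_m_def by (simp add: sum_nonneg)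

lemma inner_step:
  fixes s y u :: vec and wt \<delta> :: real
  assumes "\<delta> > 0" and nr: "(\<Sum>a<m. (y a)^2) > 0"
  defines "nr \<equiv> (\<Sum>a<m. (y a)^2)"
  defines "b \<equiv> inner_m m s y"
  defines "Ps \<equiv> (\<lambda>a. s a - b * y a / nr)"
  shows "(\<integral>\<^sup>+qt. ennreal (exp (inner_m m s (\<lambda>a. u a + (wt - qt) * y a)))
            \<partial>measure_pmf (stocq \<delta> (wt + inner_m m y u / nr)))
         \<le> ennreal (exp (inner_m m Ps u)) * ennreal (exp (b^2 * \<delta>^2/8))"
proof -
  define z where "z = wt + inner_m m y u / nr"
  have id: "inner_m m s (\<lambda>a. u a + (wt - qt) * y a) = inner_m m Ps u + b * (z - qt)" for qt
  proof -
    have "inner_m m s (\<lambda>a. u a + (wt - qt) * y a) = inner_m m s u + (wt - qt) * b"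
      unfolding inner_m_def b_def by (simp add: algebra_simps sum.distrib sum_distrib_left sum_subtractf)
    moreover have "inner_m m Ps u = inner_m m s u - b * inner_m m y u / nr"
      unfolding inner_m_def Ps_def by (simp add: algebra_simps sum_subtractf sum_distrib_left sum_divide_distrib)
    ultimately show ?thesis unfolding z_def by (simp add: algebra_simps)
  qed
  have "(\<integral>\<^sup>+qt. ennreal (exp (inner_m m s (\<lambda>a. u a + (wt - qt) * y a))) \<partial>measure_pmf (stocq \<delta> z))
      = (\<integral>\<^sup>+qt. ennreal (exp (inner_m m Ps u)) * ennreal (exp (b * (z - qt))) \<partial>measure_pmf (stocq \<delta> z))"
    by (simp add: id exp_add ennreal_mult')
  also have "\<dots> = ennreal (exp (inner_m m Ps u)) * (\<integral>\<^sup>+qt. ennreal (exp (b * (z - qt))) \<partial>measure_pmf (stocq \<delta> z))"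
    by (rule nn_integral_cmult) simp
  also have "\<dots> \<le> ennreal (exp (inner_m m Ps u)) * ennreal (exp (b^2 * \<delta>^2/8))"
    by (intro mult_left_mono stocq_hoeff assms(1)) simp
  finally show ?thesis unfolding z_def .
qed

lemma phase2_mgf:
  fixes \<delta> K :: real and w s :: vec and Yt :: mat
  assumes "\<delta> > 0" "K \<ge> 0"
  shows "(\<forall>t<n. norm_m m (col Yt t) \<noteq> 0) \<Longrightarrow> (\<forall>t<n. \<delta>^2 * (norm_m m (col Yt t))^2/4 \<le> K) \<Longrightarrow>
    (\<integral>\<^sup>+st. ennreal (exp (inner_m m s (snd st))) \<partial>measure_pmf (phase2_state \<delta> w Yt m n))
     \<le> ennreal (exp (K * (norm_m m s)^2/2))"
proof (induction n arbitrary: s)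
  case 0
  have "inner_m m s (\<lambda>_. 0) = 0" by (simp add: inner_m_def)
  thus ?case using assms by simp
next
  case (Suc t)
  define y where "y = (\<lambda>a. Yt a t)"
  define nr where "nr = (\<Sum>a<m. (y a)^2)"
  define b where "b = inner_m m s y"
  define Ps where "Ps = (\<lambda>a. s a - b * y a / nr)"
  have nrn: "(norm_m m (col Yt t))^2 = nr" unfolding nr_def y_def sumsq_norm col_def ..
  have "norm_m m (col Yt t) \<noteq> 0" using Suc.prems by simp
  moreover have "nr \<ge> 0" unfolding nr_def by (simp add: sum_nonneg)
  ultimately have nrpos: "nr > 0" using nrn by (metis less_eq_real_def power_not_zero)
  have Kt: "\<delta>^2 * nr / 4 \<le> K" using Suc.prems(2) nrn by auto
  have eq: "phase2_state \<delta> w Yt m (Suc t) = bind_pmf (phase2_state \<delta> w Yt m t)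
     (\<lambda>x. bind_pmf (stocq \<delta> (w t + inner_m m y (snd x) / nr))
        (\<lambda>qt. return_pmf ((fst x)(t:=qt), \<lambda>a. snd x a + (w t - qt) * y a)))"
    unfolding phase2_state.simps
    by (intro bind_pmf_cong refl) (auto simp: y_def col_def nrn[symmetric] split: prod.splits)
  have "(\<integral>\<^sup>+st. ennreal (exp (inner_m m s (snd st))) \<partial>measure_pmf (phase2_state \<delta> w Yt m (Suc t)))
     = (\<integral>\<^sup>+x. (\<integral>\<^sup>+qt. ennreal (exp (inner_m m s (\<lambda>a. snd x a + (w t - qt) * y a)))
            \<partial>measure_pmf (stocq \<delta> (w t + inner_m m y (snd x) / nr))) \<partial>measure_pmf (phase2_state \<delta> w Yt m t))"
    unfolding eq by simp
  also have "\<dots> \<le> (\<integral>\<^sup>+x. ennreal (exp (inner_m m Ps (snd x))) * ennreal (exp (b^2 * \<delta>^2/8))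
         \<partial>measure_pmf (phase2_state \<delta> w Yt m t))"
    apply (rule nn_integral_mono)
    using inner_step[OF assms(1), where m=m and y=y and s=s and wt="w t"] nrpos
    unfolding nr_def b_def Ps_def by blast
  also have "\<dots> = (\<integral>\<^sup>+x. ennreal (exp (inner_m m Ps (snd x))) \<partial>measure_pmf (phase2_state \<delta> w Yt m t))
         * ennreal (exp (b^2 * \<delta>^2/8))"
    by (rule nn_integral_multc) simp
  also have "\<dots> \<le> ennreal (exp (K * (norm_m m Ps)^2/2)) * ennreal (exp (b^2 * \<delta>^2/8))"
    by (intro mult_right_mono Suc.IH) (use Suc.prems in auto)
  also have "\<dots> = ennreal (exp (K * (norm_m m Ps)^2/2 + b^2 * \<delta>^2/8))"
    by (simp add: exp_add ennreal_mult')
  also have "\<dots> \<le> ennreal (exp (K * (norm_m m s)^2/2))"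
  proof (intro ennreal_leI exp_mono)
    have "(norm_m m Ps)^2 = (\<Sum>a<m. (s a)^2 - 2 * (b/nr) * (s a * y a) + (b/nr)^2 * (y a)^2)"
      unfolding sumsq_norm Ps_def using nrpos by (intro sum.cong refl) (simp add: power2_diff field_simps power2_eq_square)
    also have "\<dots> = (norm_m m s)^2 - 2 * (b/nr) * b + (b/nr)^2 * nr"
      unfolding sumsq_norm b_def inner_m_def nr_def
      by (simp add: sum.distrib sum_subtractf sum_distrib_left)
    also have "\<dots> = (norm_m m s)^2 - b^2/nr"
      using nrpos by (simp add: field_simps power2_eq_square)
    finally have np: "(norm_m m Ps)^2 = (norm_m m s)^2 - b^2/nr" .
    have "b^2 * \<delta>^2/8 \<le> K * (b^2/nr) / 2"
    proof -
      have "(\<delta>^2 * nr / 4) * (b^2/nr) / 2 \<le> K * (b^2/nr) / 2"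
        using Kt nrpos by (intro divide_right_mono mult_right_mono) auto
      moreover have "(\<delta>^2 * nr / 4) * (b^2/nr) / 2 = b^2 * \<delta>^2/8" using nrpos by (simp add: field_simps)
      ultimately show ?thesis by simp
    qed
    thus "K * (norm_m m Ps)^2/2 + b^2 * \<delta>^2/8 \<le> K * (norm_m m s)^2/2"
      unfolding np by (simp add: algebra_simps diff_divide_distrib)
  qed
  finally show ?case .
qed

lemma phase2_tail1:
  fixes \<delta> K \<alpha> \<sigma> :: real
  assumes "\<delta> > 0" "K > 0" "\<alpha> > 0" "a < m" "\<sigma>^2 = 1"
    and "\<forall>t<n. norm_m m (col Yt t) \<noteq> 0" "\<forall>t<n. \<delta>^2 * (norm_m m (col Yt t))^2/4 \<le> K"
  shows "measure_pmf.prob (phase2_state \<delta> w Yt m n) {st. \<alpha> \<le> \<sigma> * snd st a} \<le> exp (-(\<alpha>^2)/(2*K))"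
proof -
  define M where "M = measure_pmf (phase2_state \<delta> w Yt m n)"
  define l where "l = \<alpha> / K"
  define s :: vec where "s = (\<lambda>b. if b = a then \<sigma> * l else 0)"
  have inn: "inner_m m s u = \<sigma> * l * u a" for u
  proof -
    have "inner_m m s u = (\<Sum>b<m. if b = a then \<sigma> * l * u a else 0)"
      unfolding inner_m_def s_def by (intro sum.cong refl) auto
    also have "\<dots> = \<sigma> * l * u a" using assms(4) by (simp add: sum.delta)
    finally show ?thesis .
  qed
  have ns: "(norm_m m s)^2 = l^2"
  proof -
    have "(norm_m m s)^2 = (\<Sum>b<m. if b = a then (\<sigma> * l)^2 else 0)"
      unfolding sumsq_norm s_def by (intro sum.cong refl) auto
    also have "\<dots> = (\<sigma> * l)^2" using assms(4) by (simp add: sum.delta)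
    finally show ?thesis using assms(5) by (simp add: power_mult_distrib)
  qed
  have lpos: "l > 0" unfolding l_def using assms by simp
  have "emeasure M {st. \<alpha> \<le> \<sigma> * snd st a} = (\<integral>\<^sup>+st. indicator {st. \<alpha> \<le> \<sigma> * snd st a} st \<partial>M)"
    by (simp add: M_def)
  also have "\<dots> \<le> (\<integral>\<^sup>+st. ennreal (exp (inner_m m s (snd st))) * ennreal (exp (- l * \<alpha>)) \<partial>M)"
  proof (rule nn_integral_mono)
    fix st :: "vec \<times> vec"
    show "indicator {st. \<alpha> \<le> \<sigma> * snd st a} st \<le> ennreal (exp (inner_m m s (snd st))) * ennreal (exp (- l * \<alpha>))"
    proof (cases "\<alpha> \<le> \<sigma> * snd st a")
      case True
      have "l * \<alpha> \<le> l * (\<sigma> * snd st a)" using True lpos by (intro mult_left_mono) auto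
      hence "1 \<le> exp (inner_m m s (snd st)) * exp (- l * \<alpha>)"
        by (simp add: inn exp_add[symmetric] mult_ac)
      thus ?thesis using True by (simp add: ennreal_mult'[symmetric])
    qed simp
  qed
  also have "\<dots> = (\<integral>\<^sup>+st. ennreal (exp (inner_m m s (snd st))) \<partial>M) * ennreal (exp (- l * \<alpha>))"
    by (rule nn_integral_multc) (simp add: M_def)
  also have "\<dots> \<le> ennreal (exp (K * (norm_m m s)^2/2)) * ennreal (exp (- l * \<alpha>))"
    unfolding M_def using assms by (intro mult_right_mono phase2_mgf) auto
  also have "\<dots> = ennreal (exp (-(\<alpha>^2)/(2*K)))"
  proof -
    have "K * (norm_m m s)^2/2 + - l * \<alpha> = -(\<alpha>^2)/(2*K)"
      unfolding ns l_def using assms(2) by (simp add: field_simps power2_eq_square)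
    thus ?thesis by (simp add: ennreal_mult'[symmetric] exp_add[symmetric])
  qed
  finally have "emeasure M {st. \<alpha> \<le> \<sigma> * snd st a} \<le> ennreal (exp (-(\<alpha>^2)/(2*K)))" .
  thus ?thesis unfolding M_def by (simp add: measure_pmf.emeasure_eq_measure)
qed

lemma phase2_tail:
  fixes \<delta> K \<alpha> :: real
  assumes "\<delta> > 0" "K > 0" "\<alpha> > 0" "a < m"
    and "\<forall>t<n. norm_m m (col Yt t) \<noteq> 0" "\<forall>t<n. \<delta>^2 * (norm_m m (col Yt t))^2/4 \<le> K"
  shows "measure_pmf.prob (phase2_state \<delta> w Yt m n) {st. \<alpha> < \<bar>snd st a\<bar>} \<le> 2 * exp (-(\<alpha>^2)/(2*K))"
proof -
  let ?M = "measure_pmf (phase2_state \<delta> w Yt m n)"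
  have "measure_pmf.prob (phase2_state \<delta> w Yt m n) {st. \<alpha> < \<bar>snd st a\<bar>}
     \<le> measure_pmf.prob (phase2_state \<delta> w Yt m n) ({st. \<alpha> \<le> 1 * snd st a} \<union> {st. \<alpha> \<le> (-1) * snd st a})"
    by (intro measure_pmf.finite_measure_mono) auto
  also have "\<dots> \<le> measure_pmf.prob (phase2_state \<delta> w Yt m n) {st. \<alpha> \<le> 1 * snd st a}
       + measure_pmf.prob (phase2_state \<delta> w Yt m n) {st. \<alpha> \<le> (-1) * snd st a}"
    by (rule measure_Un_le) auto
  also have "\<dots> \<le> exp (-(\<alpha>^2)/(2*K)) + exp (-(\<alpha>^2)/(2*K))"
    by (intro add_mono phase2_tail1[OF assms(1-4) _ assms(5,6)]) auto
  finally show ?thesis by simp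
qed

lemma norm_L2: "norm_m m x = L2_set x {..<m}"
  by (simp add: L2_set_def norm_m_def)

lemma norm_nonneg: "norm_m m x \<ge> 0"
  by (simp add: norm_m_def sum_nonneg)

lemma norm_tri: "norm_m m (\<lambda>a. x a + y a) \<le> norm_m m x + norm_m m y"
  unfolding norm_L2 by (rule L2_set_triangle_ineq)

lemma norm_cong: "(\<And>a. a < m \<Longrightarrow> x a = y a) \<Longrightarrow> norm_m m x = norm_m m y"
  unfolding norm_m_def by (metis (mono_tags) lessThan_iff sum.cong)

lemma norm_bound:
  assumes "\<And>a. a < m \<Longrightarrow> \<bar>x a\<bar> \<le> \<alpha>" "\<alpha> \<ge> 0"
  shows "norm_m m x \<le> sqrt (real m) * \<alpha>"
proof -
  have "(\<Sum>a<m. (x a)^2) \<le> (\<Sum>a<m. \<alpha>^2)"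
  proof (rule sum_mono)
    fix a assume "a \<in> {..<m}"
    hence "\<bar>x a\<bar>^2 \<le> \<alpha>^2" using assms by (intro power_mono) auto
    thus "(x a)^2 \<le> \<alpha>^2" by simp
  qed
  hence "norm_m m x \<le> sqrt (real m * \<alpha>^2)" unfolding norm_m_def by simp
  also have "\<dots> = sqrt (real m) * \<alpha>" using assms(2) by (simp add: real_sqrt_mult)
  finally show ?thesis .
qed

lemma phase2_inv:
  "st \<in> set_pmf (phase2_state \<delta> w Yt m n) \<Longrightarrow> snd st a = (\<Sum>k<n. (w k - fst st k) * Yt a k)"
proof (induction n arbitrary: st)
  case 0
  thus ?case by simp
next
  case (Suc t)
  from Suc.prems obtain x qt where x: "x \<in> set_pmf (phase2_state \<delta> w Yt m t)"
    and st: "st = ((fst x)(t := qt), \<lambda>a. snd x a + (w t - qt) * Yt a t)"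
    by (auto split: prod.splits)
  have "(\<Sum>k<Suc t. (w k - fst st k) * Yt a k) = (\<Sum>k<t. (w k - fst x k) * Yt a k) + (w t - qt) * Yt a t"
    unfolding st by (simp add: sum.lessThan_Suc)
  also have "\<dots> = snd st a" using Suc.IH[OF x] st by simp
  finally show ?case ..
qed

lemma phase2_col:
  fixes \<delta> K \<alpha> E :: real and V wt :: vec
  assumes "\<delta> > 0" "K > 0" "\<alpha> > 0"
    and "\<forall>t<n. norm_m m (col Yt t) \<noteq> 0" "\<forall>t<n. \<delta>^2 * (norm_m m (col Yt t))^2/4 \<le> K"
    and VE: "norm_m m (\<lambda>a. V a - matvec Yt wt n a) \<le> E"
  shows "measure_pmf.prob (phase2 \<delta> wt Yt m n)
           {q. \<not> norm_m m (\<lambda>a. V a - matvec Yt q n a) \<le> E + sqrt (real m) * \<alpha>}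
         \<le> real m * (2 * exp (-(\<alpha>^2)/(2*K)))"
proof -
  let ?S = "phase2_state \<delta> wt Yt m n"
  let ?A = "fst -` {q. \<not> norm_m m (\<lambda>a. V a - matvec Yt q n a) \<le> E + sqrt (real m) * \<alpha>}"
  have "measure_pmf.prob (phase2 \<delta> wt Yt m n)
           {q. \<not> norm_m m (\<lambda>a. V a - matvec Yt q n a) \<le> E + sqrt (real m) * \<alpha>}
        = measure_pmf.prob ?S (?A \<inter> set_pmf ?S)"
    unfolding phase2_def measure_map_pmf measure_Int_set_pmf ..
  also have "\<dots> \<le> measure_pmf.prob ?S (\<Union>a\<in>{..<m}. {st. \<alpha> < \<bar>snd st a\<bar>})"
  proof (rule measure_pmf.finite_measure_mono)
    show "?A \<inter> set_pmf ?S \<subseteq> (\<Union>a\<in>{..<m}. {st. \<alpha> < \<bar>snd st a\<bar>})"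
    proof (rule ccontr)
      assume "\<not> ?thesis"
      then obtain st where st: "st \<in> set_pmf ?S" "st \<in> ?A"
        and st3: "st \<notin> (\<Union>a\<in>{..<m}. {st. \<alpha> < \<bar>snd st a\<bar>})" by blast
      from st3 have sm: "\<forall>a<m. \<bar>snd st a\<bar> \<le> \<alpha>" by (auto simp: not_less)
      have "norm_m m (\<lambda>a. V a - matvec Yt (fst st) n a)
          = norm_m m (\<lambda>a. (V a - matvec Yt wt n a) + snd st a)"
      proof (rule norm_cong)
        fix a
        have "snd st a = matvec Yt wt n a - matvec Yt (fst st) n a"
          unfolding phase2_inv[OF st(1)] matvec_def by (simp add: sum_subtractf algebra_simps)
        thus "V a - matvec Yt (fst st) n a = (V a - matvec Yt wt n a) + snd st a" by simp
      qed
      also have "\<dots> \<le> norm_m m (\<lambda>a. V a - matvec Yt wt n a) + norm_m m (snd st)"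
        by (rule norm_tri)
      also have "\<dots> \<le> E + sqrt (real m) * \<alpha>"
        using VE norm_bound[of m "snd st" \<alpha>] sm assms(3) by (intro add_mono) auto
      finally show False using st(2) by simp
    qed
  qed auto
  also have "\<dots> \<le> (\<Sum>a<m. measure_pmf.prob ?S {st. \<alpha> < \<bar>snd st a\<bar>})"
    by (rule measure_UNION_le) auto
  also have "\<dots> \<le> (\<Sum>a<m. 2 * exp (-(\<alpha>^2)/(2*K)))"
    by (intro sum_mono phase2_tail[OF assms(1-3) _ assms(4,5)]) auto
  finally show ?thesis by simp
qed

lemma cols_union:
  "emeasure (measure_pmf (cols_pmf f n)) {C. \<exists>j<n. C j \<in> B j} \<le> (\<Sum>j<n. emeasure (measure_pmf (f j)) (B j))"
proof (induction n)
  case 0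
  thus ?case by simp
next
  case (Suc n)
  let ?E = "{C. \<exists>j<n. C j \<in> B j}"
  let ?E' = "{C. \<exists>j<Suc n. C j \<in> B j}"
  have "emeasure (measure_pmf (cols_pmf f (Suc n))) ?E'
      = (\<integral>\<^sup>+C. (\<integral>\<^sup>+c. indicator ?E' (C(n := c)) \<partial>measure_pmf (f n)) \<partial>measure_pmf (cols_pmf f n))"
    by (simp flip: nn_integral_indicator)
  also have "\<dots> \<le> (\<integral>\<^sup>+C. (\<integral>\<^sup>+c. indicator ?E C + indicator (B n) c \<partial>measure_pmf (f n)) \<partial>measure_pmf (cols_pmf f n))"
  proof (intro nn_integral_mono)
    fix C c
    show "indicator ?E' (C(n := c)) \<le> (indicator ?E C + indicator (B n) c :: ennreal)"
    proof (cases "C(n := c) \<in> ?E'")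
      case True
      then obtain j where j: "j < Suc n" "(C(n := c)) j \<in> B j" by auto
      show ?thesis
      proof (cases "j = n")
        case True thus ?thesis using j by (simp add: indicator_def)
      next
        case False
        hence "C \<in> ?E" using j by (intro CollectI exI[of _ j]) auto
        thus ?thesis by (simp add: indicator_def)
      qed
    qed simp
  qed
  also have "\<dots> = (\<integral>\<^sup>+C. indicator ?E C + emeasure (measure_pmf (f n)) (B n) \<partial>measure_pmf (cols_pmf f n))"
    by (intro nn_integral_cong) (simp add: nn_integral_add measure_pmf.emeasure_space_1)
  also have "\<dots> = emeasure (measure_pmf (cols_pmf f n)) ?E + emeasure (measure_pmf (f n)) (B n)"
    by (simp add: nn_integral_add measure_pmf.emeasure_space_1)
  also have "\<dots> \<le> (\<Sum>j<n. emeasure (measure_pmf (f j)) (B j)) + emeasure (measure_pmf (f n)) (B n)"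
    using Suc.IH by (rule add_right_mono)
  finally show ?case by simp
qed

lemma col_transpose[simp]: "col (\<lambda>k j. C j k) j = C j"
  by (simp add: col_def)

lemma mat_union:
  "measure_pmf.prob (mat_pmf f n) {Q. \<exists>j<n. col Q j \<in> B j} \<le> (\<Sum>j<n. measure_pmf.prob (f j) (B j))"
proof -
  have pre: "(\<lambda>C k j. C j k) -` {Q. \<exists>j<n. col Q j \<in> B j} = {C. \<exists>j<n. C j \<in> B j}"
    by (auto simp: col_def)
  have "ennreal (measure_pmf.prob (mat_pmf f n) {Q. \<exists>j<n. col Q j \<in> B j})
       = emeasure (measure_pmf (cols_pmf f n)) {C. \<exists>j<n. C j \<in> B j}"
    unfolding mat_pmf_def by (simp add: measure_pmf.emeasure_eq_measure[symmetric])
  also have "\<dots> \<le> (\<Sum>j<n. emeasure (measure_pmf (f j)) (B j))" by (rule cols_union)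
  also have "\<dots> = ennreal (\<Sum>j<n. measure_pmf.prob (f j) (B j))"
    by (simp add: measure_pmf.emeasure_eq_measure)
  finally show ?thesis by (simp add: ennreal_le_iff sum_nonneg)
qed

lemma sum_upd:
  fixes h :: "real \<Rightarrow> nat \<Rightarrow> real"
  assumes "s < n"
  shows "(\<Sum>k<n. h ((f(s := c)) k) k) = (\<Sum>k<n. h (f k) k) - h (f s) s + h c s"
proof -
  have fin: "finite {..<n}" and sin: "s \<in> {..<n}" using assms by auto
  have "(\<Sum>k<n. h ((f(s := c)) k) k) = h ((f(s := c)) s) s + (\<Sum>k\<in>{..<n}-{s}. h ((f(s := c)) k) k)"
    by (rule sum.remove[OF fin sin])
  also have "h ((f(s := c)) s) s = h c s" by simp
  also have "(\<Sum>k\<in>{..<n}-{s}. h ((f(s := c)) k) k) = (\<Sum>k\<in>{..<n}-{s}. h (f k) k)"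
    by (intro sum.cong) auto
  also have "\<dots> = (\<Sum>k<n. h (f k) k) - h (f s) s"
    using sum.remove[OF fin sin, of "\<lambda>k. h (f k) k"] by simp
  finally show ?thesis by simp
qed

lemma ord_inv:
  assumes "n > 0"
  shows "snd (ord_state m n Y Yt w t) a = (\<Sum>k<min t n. w k * Y a k - fst (ord_state m n Y Yt w t) k * Yt a k)"
proof (induction t)
  case 0
  thus ?case by simp
next
  case (Suc t)
  obtain wt u where st: "ord_state m n Y Yt w t = (wt, u)" by (cases "ord_state m n Y Yt w t")
  show ?case
  proof (cases "t < n")
    case True
    define c where "c = inner_m m (col Yt t) (\<lambda>a. u a + w t * Y a t) / (norm_m m (col Yt t))^2"
    have e: "ord_state m n Y Yt w (Suc t) = (wt(t := c), \<lambda>a. u a + w t * Y a t - c * Yt a t)"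
      using True by (simp add: st ord_step_def Let_def c_def)
    have mi: "min (Suc t) n = Suc t" "min t n = t" using True by auto
    have "(\<Sum>k<Suc t. w k * Y a k - (wt(t := c)) k * Yt a k)
        = (\<Sum>k<t. w k * Y a k - wt k * Yt a k) + (w t * Y a t - c * Yt a t)"
      by (simp add: sum.lessThan_Suc)
    thus ?thesis using Suc.IH unfolding e mi st by simp
  next
    case False
    define s where "s = t mod n"
    have sn: "s < n" unfolding s_def using assms by simp
    define v where "v = (\<lambda>a. u a - w s * Y a s + wt s * Yt a s)"
    define c where "c = inner_m m (col Yt s) (\<lambda>a. v a + w s * Y a s) / (norm_m m (col Yt s))^2"
    have e: "ord_state m n Y Yt w (Suc t) = (wt(s := c), \<lambda>a. v a + w s * Y a s - c * Yt a s)"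
      using False by (simp add: st ord_step_def Let_def c_def v_def s_def)
    have mi: "min (Suc t) n = n" "min t n = n" using False by auto
    have "(\<Sum>k<n. w k * Y a k - (wt(s := c)) k * Yt a k)
        = (\<Sum>k<n. w k * Y a k - wt k * Yt a k) - (w s * Y a s - wt s * Yt a s) + (w s * Y a s - c * Yt a s)"
      using sum_upd[OF sn, of "\<lambda>x k. w k * Y a k - x * Yt a k" wt c] by simp
    thus ?thesis using Suc.IH unfolding e mi st by (simp add: v_def)
  qed
qed

lemma norm_scale: "norm_m m (\<lambda>a. c * x a) = \<bar>c\<bar> * norm_m m x"
proof -
  have "(\<Sum>a<m. (c * x a)^2) = c^2 * (\<Sum>a<m. (x a)^2)"
    by (simp add: power_mult_distrib sum_distrib_left)
  thus ?thesis unfolding norm_m_def by (simp add: real_sqrt_mult)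
qed

lemma proj_norm_le:
  assumes "(\<Sum>a<m. (y a)^2) > 0"
  shows "norm_m m (\<lambda>a. z a - inner_m m y z / (\<Sum>a<m. (y a)^2) * y a) \<le> norm_m m z"
proof -
  define nr where "nr = (\<Sum>a<m. (y a)^2)"
  define l where "l = inner_m m y z / nr"
  have nr: "nr > 0" using assms nr_def by simp
  have "(\<Sum>a<m. (z a - l * y a)^2) = (\<Sum>a<m. (z a)^2 - 2 * l * (y a * z a) + l^2 * (y a)^2)"
    by (intro sum.cong refl) (simp add: power2_diff power_mult_distrib algebra_simps)
  also have "\<dots> = (\<Sum>a<m. (z a)^2) - 2 * l * inner_m m y z + l^2 * nr"
    unfolding inner_m_def nr_def by (simp add: sum.distrib sum_subtractf sum_distrib_left)
  also have "\<dots> = (\<Sum>a<m. (z a)^2) - (inner_m m y z)^2 / nr"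
    unfolding l_def using nr by (simp add: field_simps power2_eq_square)
  also have "\<dots> \<le> (\<Sum>a<m. (z a)^2)" using nr by simp
  finally show ?thesis unfolding norm_m_def l_def nr_def by simp
qed

lemma ord_first_pass:
  assumes "n > 0" and nz: "\<forall>t<n. norm_m m (col Yt t) \<noteq> 0"
  shows "t \<le> n \<Longrightarrow> norm_m m (snd (ord_state m n Y Yt w t)) \<le> (\<Sum>k<t. \<bar>w k\<bar> * norm_m m (\<lambda>a. Y a k - Yt a k))"
proof (induction t)
  case 0
  thus ?case by (simp add: norm_m_def)
next
  case (Suc t)
  hence tn: "t < n" by simp
  obtain wt u where st: "ord_state m n Y Yt w t = (wt, u)" by (cases "ord_state m n Y Yt w t")
  define y where "y = col Yt t"
  define nr where "nr = (\<Sum>a<m. (y a)^2)"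
  have nrn: "(norm_m m y)^2 = nr" unfolding nr_def sumsq_norm ..
  have "norm_m m y \<noteq> 0" using nz tn y_def by simp
  moreover have "nr \<ge> 0" unfolding nr_def by (simp add: sum_nonneg)
  ultimately have nrpos: "nr > 0" using nrn by (metis less_eq_real_def power_not_zero)
  define c where "c = inner_m m y (\<lambda>a. u a + w t * Y a t) / nr"
  have nrn2: "(norm_m m (\<lambda>a. Yt a t))^2 = nr" using nrn unfolding y_def col_def .
  have e: "snd (ord_state m n Y Yt w (Suc t)) = (\<lambda>a. u a + w t * Y a t - c * Yt a t)"
    using tn by (simp add: st ord_step_def Let_def c_def y_def col_def nrn2)
  define z where "z = (\<lambda>a. u a + w t * (Y a t - Yt a t))"
  have iz: "inner_m m y z = inner_m m y (\<lambda>a. u a + w t * Y a t) - w t * nr"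
    unfolding inner_m_def z_def nr_def y_def col_def
    by (simp add: algebra_simps sum.distrib sum_subtractf sum_distrib_left power2_eq_square)
  have "snd (ord_state m n Y Yt w (Suc t)) = (\<lambda>a. z a - inner_m m y z / nr * y a)"
  proof
    fix a
    have h: "inner_m m y z / nr = c - w t" unfolding iz c_def using nrpos by (simp add: field_simps)
    show "snd (ord_state m n Y Yt w (Suc t)) a = z a - inner_m m y z / nr * y a"
      unfolding h unfolding e z_def y_def col_def by (simp add: algebra_simps)
  qed
  hence "norm_m m (snd (ord_state m n Y Yt w (Suc t))) \<le> norm_m m z"
    using proj_norm_le[where m=m and y=y and z=z] nrpos unfolding nr_def by simp
  also have "\<dots> \<le> norm_m m u + norm_m m (\<lambda>a. w t * (Y a t - Yt a t))"
    unfolding z_def by (rule norm_tri)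
  also have "\<dots> = norm_m m u + \<bar>w t\<bar> * norm_m m (\<lambda>a. Y a t - Yt a t)"
    by (simp add: norm_scale)
  also have "\<dots> \<le> (\<Sum>k<t. \<bar>w k\<bar> * norm_m m (\<lambda>a. Y a k - Yt a k)) + \<bar>w t\<bar> * norm_m m (\<lambda>a. Y a t - Yt a t)"
    using Suc.IH Suc.prems st by simp
  finally show ?case by simp
qed

lemma ord_later:
  assumes "n > 0" and nz: "\<forall>t<n. norm_m m (col Yt t) \<noteq> 0" and "n \<le> t"
  shows "snd (ord_state m n Y Yt w (Suc t)) a = snd (ord_state m n Y Yt w t) a
     - inner_m m (col Yt (t mod n)) (snd (ord_state m n Y Yt w t)) / (norm_m m (col Yt (t mod n)))^2 * Yt a (t mod n)"
proof -
  obtain wt u where st: "ord_state m n Y Yt w t = (wt, u)" by (cases "ord_state m n Y Yt w t")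
  define s where "s = t mod n"
  have sn: "s < n" unfolding s_def using assms by simp
  define y where "y = col Yt s"
  define nr where "nr = (norm_m m y)^2"
  have "norm_m m y \<noteq> 0" using nz sn y_def by simp
  hence nrpos: "nr \<noteq> 0" unfolding nr_def by simp
  define v where "v = (\<lambda>a. u a - w s * Y a s + wt s * Yt a s)"
  define c where "c = inner_m m y (\<lambda>a. v a + w s * Y a s) / nr"
  have e: "snd (ord_state m n Y Yt w (Suc t)) = (\<lambda>a. v a + w s * Y a s - c * Yt a s)"
    using assms(3) by (simp add: st ord_step_def Let_def c_def v_def s_def y_def nr_def)
  have "inner_m m y (\<lambda>a. v a + w s * Y a s) = inner_m m y u + wt s * nr"
    unfolding inner_m_def v_def nr_def sumsq_norm y_def col_def
    by (simp add: algebra_simps sum.distrib sum_distrib_left power2_eq_square)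
  hence "c = inner_m m y u / nr + wt s" unfolding c_def using nrpos by (simp add: field_simps)
  thus ?thesis unfolding e st by (simp add: v_def y_def nr_def s_def[symmetric] col_def algebra_simps)
qed

lemma matvec_idm: "a < m \<Longrightarrow> matvec idm x m a = x a"
proof -
  assume a: "a < m"
  have "matvec idm x m a = (\<Sum>k<m. if k = a then x a else 0)"
    unfolding matvec_def idm_def by (intro sum.cong) auto
  thus ?thesis using a by (simp add: sum.delta)
qed

lemma matvec_perp: "a < m \<Longrightarrow> matvec (proj_perp m y) x m a = x a - y a * inner_m m y x / (norm_m m y)^2"
proof -
  assume a: "a < m"
  have "matvec (proj_perp m y) x m a = matvec idm x m a - y a / (norm_m m y)^2 * (\<Sum>b<m. y b * x b)"
    unfolding matvec_def proj_perp_def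
    by (simp add: algebra_simps sum_subtractf sum_distrib_left sum_divide_distrib)
  thus ?thesis using a by (simp add: matvec_idm inner_m_def)
qed

lemma matvec_matmul: "matvec (matmul m A B) x m a = matvec A (\<lambda>b. matvec B x m b) m a"
  unfolding matvec_def matmul_def
  by (simp add: sum_distrib_left sum_distrib_right mult.assoc) (rule sum.swap)

lemma matvec_cong: "(\<And>b. b < m \<Longrightarrow> x b = x' b) \<Longrightarrow> matvec A x m a = matvec A x' m a"
  unfolding matvec_def by (intro sum.cong) auto

lemma inner_cong: "(\<And>b. b < m \<Longrightarrow> x b = x' b) \<Longrightarrow> inner_m m y x = inner_m m y x'"
  unfolding inner_m_def by (intro sum.cong) auto

lemma ord_pass:
  assumes "n > 0" and nz: "\<forall>t<n. norm_m m (col Yt t) \<noteq> 0" and "k \<ge> 1"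
  shows "j \<le> n \<Longrightarrow> a < m \<Longrightarrow> snd (ord_state m n Y Yt w (k*n + j)) a
             = matvec (proj_prod m Yt j) (snd (ord_state m n Y Yt w (k*n))) m a"
proof (induction j arbitrary: a)
  case 0
  thus ?case by (simp add: matvec_idm)
next
  case (Suc j)
  let ?u = "snd (ord_state m n Y Yt w (k*n + j))"
  let ?v = "snd (ord_state m n Y Yt w (k*n))"
  have jn: "j < n" using Suc.prems by simp
  have md: "(k*n + j) mod n = j" using jn by simp
  have ge: "n \<le> k*n + j" using assms(3) by (metis le_add1 mult_le_mono1 mult_1 order_trans)
  have IH: "\<And>b. b < m \<Longrightarrow> ?u b = matvec (proj_prod m Yt j) ?v m b" using Suc.IH jn by simp
  have "snd (ord_state m n Y Yt w (k*n + Suc j)) a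
      = ?u a - inner_m m (col Yt j) ?u / (norm_m m (col Yt j))^2 * Yt a j"
    using ord_later[OF assms(1) nz ge, of Y w a] md by simp
  also have "\<dots> = matvec (proj_prod m Yt j) ?v m a
      - inner_m m (col Yt j) (\<lambda>b. matvec (proj_prod m Yt j) ?v m b) / (norm_m m (col Yt j))^2 * Yt a j"
  proof -
    have i1: "inner_m m (col Yt j) ?u = inner_m m (col Yt j) (\<lambda>b. matvec (proj_prod m Yt j) ?v m b)"
      by (rule inner_cong) (rule IH)
    show ?thesis by (simp only: IH[OF Suc.prems(2)] i1)
  qed
  also have "\<dots> = matvec (proj_prod m Yt (Suc j)) ?v m a"
    using Suc.prems(2) by (simp add: matvec_matmul matvec_perp col_def)
  finally show ?case .
qed

lemma coord_le_norm: "b < m \<Longrightarrow> \<bar>x b\<bar> \<le> norm_m m x"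
proof -
  assume b: "b < m"
  have "(x b)^2 \<le> (\<Sum>a<m. (x a)^2)"
    using b by (intro member_le_sum) auto
  hence "sqrt ((x b)^2) \<le> norm_m m x" unfolding norm_m_def by (rule real_sqrt_le_mono)
  thus ?thesis by simp
qed

lemma matvec_bound: "norm_m m (matvec A x m) \<le> (\<Sum>a<m. \<Sum>b<m. \<bar>A a b\<bar>) * norm_m m x"
proof -
  have "norm_m m (matvec A x m) \<le> (\<Sum>a<m. \<bar>matvec A x m a\<bar>)"
    unfolding norm_L2 by (rule L2_set_le_sum_abs)
  also have "\<dots> \<le> (\<Sum>a<m. (\<Sum>b<m. \<bar>A a b\<bar>) * norm_m m x)"
  proof (rule sum_mono)
    fix a
    have "\<bar>matvec A x m a\<bar> \<le> (\<Sum>b<m. \<bar>A a b * x b\<bar>)"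
      unfolding matvec_def by (rule sum_abs)
    also have "\<dots> \<le> (\<Sum>b<m. \<bar>A a b\<bar> * norm_m m x)"
      by (intro sum_mono) (auto simp: abs_mult intro: mult_left_mono coord_le_norm)
    finally show "\<bar>matvec A x m a\<bar> \<le> (\<Sum>b<m. \<bar>A a b\<bar>) * norm_m m x"
      by (simp add: sum_distrib_right)
  qed
  finally show ?thesis by (simp add: sum_distrib_right)
qed

lemma op_norm_props:
  shows "0 \<le> op_norm m A" and "norm_m m (matvec A x m) \<le> op_norm m A * norm_m m x"
proof -
  define S where "S = {norm_m m (matvec A x m) | x. norm_m m x \<le> 1}"
  define B where "B = (\<Sum>a<m. \<Sum>b<m. \<bar>A a b\<bar>)"
  have B0: "B \<ge> 0" unfolding B_def by (simp add: sum_nonneg)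
  have bdd: "bdd_above S"
  proof (rule bdd_aboveI)
    fix y assume "y \<in> S"
    then obtain x where "y = norm_m m (matvec A x m)" "norm_m m x \<le> 1" unfolding S_def by auto
    thus "y \<le> B" using matvec_bound[of m A x] B0 unfolding B_def[symmetric]
      by (smt (verit) mult_left_le)
  qed
  have z: "matvec A (\<lambda>_. 0) m = (\<lambda>_. 0)" by (simp add: matvec_def)
  have "0 \<in> S" unfolding S_def using z by (auto simp: norm_m_def intro!: exI[of _ "\<lambda>_. 0"])
  hence op0: "0 \<le> op_norm m A" unfolding op_norm_def S_def[symmetric] using bdd by (meson cSup_upper2 order_refl)
  show "0 \<le> op_norm m A" by (fact op0)
  show "norm_m m (matvec A x m) \<le> op_norm m A * norm_m m x"
  proof (cases "norm_m m x = 0")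
    case True
    have "\<And>b. b < m \<Longrightarrow> x b = 0" using coord_le_norm[of _ m x] True by fastforce
    hence "matvec A x m = (\<lambda>_. 0)" using z by (metis matvec_cong)
    thus ?thesis using True by (simp add: norm_m_def)
  next
    case False
    define nx where "nx = norm_m m x"
    have nx: "nx > 0" using False norm_nonneg[of m x] nx_def by simp
    define y where "y = (\<lambda>b. (1/nx) * x b)"
    have ny: "norm_m m y = 1" unfolding y_def norm_scale using nx nx_def by simp
    have my: "matvec A y m = (\<lambda>a. (1/nx) * matvec A x m a)"
      unfolding y_def matvec_def by (simp add: sum_distrib_left algebra_simps)
    have "norm_m m (matvec A y m) \<in> S" unfolding S_def using ny by auto
    hence "norm_m m (matvec A y m) \<le> op_norm m A" unfolding op_norm_def S_def[symmetric]
      using bdd by (rule cSup_upper)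
    hence "(1/nx) * norm_m m (matvec A x m) \<le> op_norm m A" unfolding my norm_scale using nx by simp
    thus ?thesis using nx unfolding nx_def[symmetric] by (simp add: field_simps)
  qed
qed

lemma ord_iter:
  assumes "n > 0" and nz: "\<forall>t<n. norm_m m (col Yt t) \<noteq> 0"
  shows "k \<ge> 1 \<Longrightarrow> norm_m m (snd (ord_state m n Y Yt w (k*n)))
     \<le> op_norm m (proj_prod m Yt n) ^ (k - 1) * norm_m m (snd (ord_state m n Y Yt w n))"
proof (induction k)
  case 0 thus ?case by simp
next
  case (Suc k)
  show ?case
  proof (cases "k = 0")
    case True thus ?thesis by simp
  next
    case False
    let ?op = "op_norm m (proj_prod m Yt n)"
    have "norm_m m (snd (ord_state m n Y Yt w (Suc k * n)))
        = norm_m m (matvec (proj_prod m Yt n) (snd (ord_state m n Y Yt w (k*n))) m)"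
    proof (rule norm_cong)
      fix a assume "a < m"
      thus "snd (ord_state m n Y Yt w (Suc k * n)) a = matvec (proj_prod m Yt n) (snd (ord_state m n Y Yt w (k*n))) m a"
        using ord_pass[OF assms(1) nz, of k n a Y w] False by (simp add: add.commute)
    qed
    also have "\<dots> \<le> ?op * norm_m m (snd (ord_state m n Y Yt w (k*n)))"
      by (rule op_norm_props(2))
    also have "\<dots> \<le> ?op * (?op ^ (k - 1) * norm_m m (snd (ord_state m n Y Yt w n)))"
      using Suc.IH False op_norm_props(1) by (intro mult_left_mono) auto
    also have "\<dots> = ?op ^ (Suc k - 1) * norm_m m (snd (ord_state m n Y Yt w n))"
      using False by (cases k) auto
    finally show ?thesis .
  qed
qed

lemma order_err:
  assumes "n > 0" and nz: "\<forall>t<n. norm_m m (col Yt t) \<noteq> 0" and "r \<ge> 1"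
    and wb: "\<forall>k<n. \<bar>w k\<bar> \<le> mw" and db: "\<forall>k<n. norm_m m (\<lambda>a. Y a k - Yt a k) \<le> D"
  shows "norm_m m (\<lambda>a. matvec Y w n a - matvec Yt (order_r_align r m n Y Yt w) n a)
     \<le> real n * mw * op_norm m (proj_prod m Yt n) ^ (r - 1) * D"
proof -
  let ?op = "op_norm m (proj_prod m Yt n)"
  have mi: "min (r*n) n = n" using assms(3) by simp
  have "norm_m m (\<lambda>a. matvec Y w n a - matvec Yt (order_r_align r m n Y Yt w) n a)
      = norm_m m (snd (ord_state m n Y Yt w (r*n)))"
  proof (rule norm_cong)
    fix a
    show "matvec Y w n a - matvec Yt (order_r_align r m n Y Yt w) n a = snd (ord_state m n Y Yt w (r*n)) a"
      unfolding ord_inv[OF assms(1)] mi order_r_align_def matvec_def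
      by (simp add: sum_subtractf mult.commute)
  qed
  also have "\<dots> \<le> ?op ^ (r - 1) * norm_m m (snd (ord_state m n Y Yt w n))"
    by (rule ord_iter[OF assms(1) nz assms(3)])
  also have "\<dots> \<le> ?op ^ (r - 1) * (real n * mw * D)"
  proof (intro mult_left_mono)
    show "0 \<le> ?op ^ (r - 1)" using op_norm_props(1) by simp
    have mw0: "0 \<le> mw" using wb assms(1) by (meson abs_ge_zero order_trans)
    have "norm_m m (snd (ord_state m n Y Yt w n)) \<le> (\<Sum>k<n. \<bar>w k\<bar> * norm_m m (\<lambda>a. Y a k - Yt a k))"
      by (rule ord_first_pass[OF assms(1) nz]) simp
    also have "\<dots> \<le> (\<Sum>k<n. mw * D)"
      using wb db mw0 by (intro sum_mono mult_mono) (auto simp: norm_nonneg)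
    finally show "norm_m m (snd (ord_state m n Y Yt w n)) \<le> real n * mw * D" by simp
  qed
  finally show ?thesis by (simp add: mult_ac)
qed

lemma arith_final:
  fixes n :: nat and p :: nat
  assumes "real n ^ p \<ge> 2" "n \<ge> 1"
  shows "2 * exp (- (4 * pi * real p * ln (real n))) \<le> sqrt 2 / real n ^ p"
proof -
  define x where "x = real n ^ p"
  have n0: "real n > 0" using assms by simp
  have ex: "exp (real p * ln (real n)) = x" unfolding x_def using n0 by (simp add: exp_of_nat_mult)
  have lnn: "ln (real n) \<ge> 0" using assms by simp
  have "exp (4 * (real p * ln (real n))) \<le> exp (4 * pi * real p * ln (real n))"
  proof (intro exp_mono)
    have "4 * (real p * ln (real n)) \<le> (4*pi) * (real p * ln (real n))"
      by (rule mult_right_mono) (use pi_gt3 lnn in auto)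
    thus "4 * (real p * ln (real n)) \<le> 4 * pi * real p * ln (real n)" by (simp add: mult.assoc)
  qed
  moreover have "exp (4 * (real p * ln (real n))) = x^4"
    using ex by (metis exp_of_nat_mult of_nat_numeral)
  ultimately have big: "x^4 \<le> exp (4 * pi * real p * ln (real n))" by simp
  have x2: "x \<ge> 2" unfolding x_def using assms by simp
  have "8 * x \<le> x^4"
  proof -
    have "(2::real)^3 \<le> x^3" using x2 by (intro power_mono) auto
    hence "8 * x \<le> x^3 * x" using x2 by (intro mult_right_mono) auto
    thus ?thesis by (simp add: power_Suc2[symmetric] numeral_eq_Suc)
  qed
  hence le: "8 * x \<le> exp (4 * pi * real p * ln (real n))" using big by simp
  have "2 * exp (- (4 * pi * real p * ln (real n))) = 2 / exp (4 * pi * real p * ln (real n))"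
    by (simp add: exp_minus field_simps)
  also have "\<dots> \<le> 2 / (8 * x)" using le x2 by (intro divide_left_mono) auto
  also have "\<dots> \<le> sqrt 2 / x"
  proof -
    have "1 \<le> sqrt (2::real)" by simp
    hence "2 / (8 * x) \<le> 1 / x" using x2 by (simp add: field_simps)
    also have "1 / x \<le> sqrt 2 / x" using x2 \<open>1 \<le> sqrt 2\<close> by (intro divide_right_mono) auto
    finally show ?thesis .
  qed
  finally show ?thesis unfolding x_def .
qed

lemma core:
  fixes \<delta> :: real and m n Ni p :: nat and Yt :: mat and V wt :: "nat \<Rightarrow> vec" and E :: "nat \<Rightarrow> real"
  assumes d: "\<delta> > 0" and nz: "\<forall>t<n. norm_m m (col Yt t) \<noteq> 0"
    and VE: "\<forall>j<Ni. norm_m m (\<lambda>a. V j a - matvec Yt (wt j) n a) \<le> E j"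
  defines "cc \<equiv> \<delta> * sqrt (2 * pi * real p * real m * ln (real n))"
  defines "Mt \<equiv> (MAX t\<in>{..<n}. norm_m m (col Yt t))"
  shows "measure_pmf.prob (mat_pmf (\<lambda>j. phase2 \<delta> (wt j) Yt m n) Ni)
     {Qi. \<forall>j<Ni. norm_m m (\<lambda>a. V j a - matvec Yt (col Qi j) n a) \<le> E j + cc * Mt}
     \<ge> 1 - sqrt 2 * real m * real Ni / real n ^ p"
proof -
  let ?P = "mat_pmf (\<lambda>j. phase2 \<delta> (wt j) Yt m n) Ni"
  let ?G = "{Qi. \<forall>j<Ni. norm_m m (\<lambda>a. V j a - matvec Yt (col Qi j) n a) \<le> E j + cc * Mt}"
  have bnd1: "1 - sqrt 2 * real m * real Ni / real n ^ p \<le> 1"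
    by (simp add: divide_nonneg_nonneg)
  show ?thesis
  proof (cases "n = 0 \<or> Ni = 0")
    case True
    have "?G = UNIV"
    proof (cases "n = 0")
      case True
      have "cc = 0" unfolding cc_def using True by simp
      moreover have "matvec Yt q n = (\<lambda>_. 0)" for q using True by (simp add: matvec_def)
      ultimately show ?thesis using VE by simp
    next
      case False
      thus ?thesis using True by simp
    qed
    thus ?thesis using bnd1 by simp
  next
    case False
    hence n1: "n \<ge> 1" and Ni1: "Ni \<ge> 1" by auto
    have m1: "m \<ge> 1"
    proof (rule ccontr)
      assume "\<not> m \<ge> 1"
      hence "m = 0" by simp
      thus False using nz n1 by (auto simp: norm_m_def)
    qed
    show ?thesis
    proof (cases "1 - sqrt 2 * real m * real Ni / real n ^ p \<le> 0")
      case True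
      thus ?thesis using measure_nonneg[of "measure_pmf ?P" ?G] by linarith
    next
      case False
      have np: "real n ^ p > 0" using n1 by simp
      have "sqrt 2 * real m * real Ni < real n ^ p" using False np by (simp add: field_simps)
      moreover have "sqrt 2 \<le> sqrt 2 * real m * real Ni"
      proof -
        have "0 < m * Ni" using m1 Ni1 by simp
        hence "1 \<le> real (m * Ni)" by linarith
        hence "1 \<le> real m * real Ni" by (simp only: of_nat_mult)
        thus ?thesis by (simp add: mult.assoc)
      qed
      moreover have "sqrt (2::real) > 1" by simp
      ultimately have big: "real n ^ p > sqrt 2" "real n ^ p > 1" by linarith+
      have p1: "p \<ge> 1" using big(2) by (cases p) auto
      have n2: "n \<ge> 2" proof (rule ccontr) assume "\<not> n \<ge> 2" hence "n = 1" using n1 by simp thus False using big(2) by simp qed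
      have np2: "real n ^ p \<ge> 2"
      proof -
        have a: "real n ^ 1 \<le> real n ^ p" using n2 p1 by (intro power_increasing) auto
        have b: "real n ^ 1 = real n" by (rule power_one_right)
        have c: "2 \<le> real n" using n2 by simp
        from a b c show ?thesis by linarith
      qed
      have fin: "finite (norm_m m ` col Yt ` {..<n})" by simp
      have Mt_ge: "norm_m m (col Yt t) \<le> Mt" if "t < n" for t
        unfolding Mt_def using that by (intro Max_ge) auto
      have Mt_pos: "Mt > 0"
      proof -
        have "norm_m m (col Yt 0) > 0" using nz n1 norm_nonneg[of m "col Yt 0"] by force
        thus ?thesis using Mt_ge[of 0] n1 by linarith
      qed
      define K where "K = \<delta>^2 * Mt^2 / 4"
      define \<alpha> where "\<alpha> = \<delta> * sqrt (2 * pi * real p * ln (real n)) * Mt"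
      have lnpos: "ln (real n) > 0" using n2 by simp
      have Kpos: "K > 0" unfolding K_def using d Mt_pos by simp
      have apos: "\<alpha> > 0" unfolding \<alpha>_def using d Mt_pos lnpos p1 by simp
      have Kt: "\<forall>t<n. \<delta>^2 * (norm_m m (col Yt t))^2/4 \<le> K"
      proof (intro allI impI)
        fix t assume "t < n"
        hence "(norm_m m (col Yt t))^2 \<le> Mt^2" using Mt_ge norm_nonneg by (intro power_mono) auto
        thus "\<delta>^2 * (norm_m m (col Yt t))^2/4 \<le> K" unfolding K_def by (intro divide_right_mono mult_left_mono) auto
      qed
      have ccM: "cc * Mt = sqrt (real m) * \<alpha>"
      proof -
        have "sqrt (2 * pi * real p * real m * ln (real n)) = sqrt (real m) * sqrt (2 * pi * real p * ln (real n))"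
          by (simp add: real_sqrt_mult[symmetric] mult_ac)
        thus ?thesis unfolding cc_def \<alpha>_def by (simp add: mult_ac)
      qed
      have expo: "\<alpha>^2 / (2*K) = 4 * pi * real p * ln (real n)"
        unfolding \<alpha>_def K_def using d Mt_pos lnpos p1
        by (simp add: power_mult_distrib field_simps)
      define B where "B = (\<lambda>j. {q. \<not> norm_m m (\<lambda>a. V j a - matvec Yt q n a) \<le> E j + sqrt (real m) * \<alpha>})"
      have compl: "UNIV - ?G = {Qi. \<exists>j<Ni. col Qi j \<in> B j}"
        unfolding B_def ccM by auto
      have "measure_pmf.prob ?P (UNIV - ?G) \<le> (\<Sum>j<Ni. measure_pmf.prob (phase2 \<delta> (wt j) Yt m n) (B j))"
        unfolding compl by (rule mat_union)
      also have "\<dots> \<le> (\<Sum>j<Ni. real m * (2 * exp (-(\<alpha>^2)/(2*K))))"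
        unfolding B_def using VE by (intro sum_mono phase2_col[OF d Kpos apos nz Kt]) auto
      also have "\<dots> = real Ni * real m * (2 * exp (- (4 * pi * real p * ln (real n))))"
        using expo by (simp add: minus_divide_left[symmetric])
      also have "\<dots> \<le> real Ni * real m * (sqrt 2 / real n ^ p)"
        by (intro mult_left_mono arith_final np2 n1) auto
      finally have "measure_pmf.prob ?P (UNIV - ?G) \<le> sqrt 2 * real m * real Ni / real n ^ p"
        by (simp add: mult_ac)
      moreover have "measure_pmf.prob ?P (UNIV - ?G) = 1 - measure_pmf.prob ?P ?G"
        using measure_pmf.prob_compl[of ?G "?P"] by simp
      ultimately show ?thesis by linarith
    qed
  qed
qed

lemma relu_sq: "(relu x - relu y)^2 \<le> (x - y)^2"
proof -
  have "\<bar>relu x - relu y\<bar> \<le> \<bar>x - y\<bar>" by (auto simp: relu_def max_def)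
  hence "\<bar>relu x - relu y\<bar>^2 \<le> \<bar>x - y\<bar>^2" by (intro power_mono) auto
  thus ?thesis by simp
qed

lemma col_diff_Suc:
  "norm_m m (\<lambda>a. net X W N (Suc k) a b - net X Q N (Suc k) a b)
   \<le> col_err m (N k) (net X W N k) (W (Suc k)) (net X Q N k) (Q (Suc k)) b"
  unfolding col_err_def norm_m_def
proof (intro real_sqrt_le_mono sum_mono)
  fix a
  show "(net X W N (Suc k) a b - net X Q N (Suc k) a b)^2
     \<le> (matvec (net X W N k) (col (W (Suc k)) b) (N k) a - matvec (net X Q N k) (col (Q (Suc k)) b) (N k) a)^2"
    by (simp add: matvec_def col_def relu_sq)
qed

lemma colQ_Suc:
  "norm_m m (col (net X Q N (Suc k)) b)
   \<le> norm_m m (col (net X W N (Suc k)) b) + col_err m (N k) (net X W N k) (W (Suc k)) (net X Q N k) (Q (Suc k)) b"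
proof -
  have "norm_m m (col (net X Q N (Suc k)) b)
     = norm_m m (\<lambda>a. col (net X W N (Suc k)) b a + (-1) * (net X W N (Suc k) a b - net X Q N (Suc k) a b))"
    by (simp add: col_def)
  also have "\<dots> \<le> norm_m m (col (net X W N (Suc k)) b) + norm_m m (\<lambda>a. (-1) * (net X W N (Suc k) a b - net X Q N (Suc k) a b))"
    by (rule norm_tri)
  also have "norm_m m (\<lambda>a. (-1) * (net X W N (Suc k) a b - net X Q N (Suc k) a b))
     = norm_m m (\<lambda>a. net X W N (Suc k) a b - net X Q N (Suc k) a b)"
    using norm_scale[of m "-1" "\<lambda>a. net X W N (Suc k) a b - net X Q N (Suc k) a b"] by simp
  finally show ?thesis using col_diff_Suc[of m X W N k b Q] by linarith
qed

lemma col_diff_i: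
  "2 \<le> i \<Longrightarrow> norm_m m (\<lambda>a. net X W N (i-1) a b - net X Q N (i-1) a b)
   \<le> col_err m (N (i-2)) (net X W N (i-2)) (W (i-1)) (net X Q N (i-2)) (Q (i-1)) b"
proof -
  assume "2 \<le> i"
  then obtain k where k: "i = Suc (Suc k)" by (metis add_2_eq_Suc le_Suc_ex)
  show ?thesis using col_diff_Suc[of m X W N k b Q] unfolding k by simp
qed

lemma colQ_i:
  "2 \<le> i \<Longrightarrow> norm_m m (col (net X Q N (i-1)) b)
   \<le> norm_m m (col (net X W N (i-1)) b) + col_err m (N (i-2)) (net X W N (i-2)) (W (i-1)) (net X Q N (i-2)) (Q (i-1)) b"
proof -
  assume "2 \<le> i"
  then obtain k where k: "i = Suc (Suc k)" by (metis add_2_eq_Suc le_Suc_ex)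
  show ?thesis using colQ_Suc[of m X Q N k b W] unfolding k by simp
qed

lemma max_split:
  fixes f g h :: "nat \<Rightarrow> real"
  assumes "n > 0" "\<And>t. t < n \<Longrightarrow> f t \<le> g t + h t"
  shows "(MAX t\<in>{..<n}. f t) \<le> (MAX t\<in>{..<n}. g t) + (MAX t\<in>{..<n}. h t)"
proof -
  have "\<forall>t\<in>{..<n}. f t \<le> (MAX t\<in>{..<n}. g t) + (MAX t\<in>{..<n}. h t)"
  proof
    fix t assume t: "t \<in> {..<n}"
    have "g t \<le> (MAX t\<in>{..<n}. g t)" "h t \<le> (MAX t\<in>{..<n}. h t)" using t by (intro Max_ge; auto)+
    moreover have "f t \<le> g t + h t" using assms(2) t by simp
    ultimately show "f t \<le> (MAX t\<in>{..<n}. g t) + (MAX t\<in>{..<n}. h t)" by linarith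
  qed
  thus ?thesis using assms(1) by (subst Max_le_iff) auto
qed


theorem mainTheorem4:
  fixes X :: mat and W :: "nat \<Rightarrow> mat" and N :: "nat \<Rightarrow> nat"
    and m L i p r :: nat and \<delta> :: real
  assumes "\<delta> > 0" and "2 \<le> i" and "i \<le> L"
  defines "c \<equiv> \<delta> * sqrt (2 * pi * real p * real m * ln (real (N (i-1))))"
  shows
   "(\<forall>Q wt.
      (\<forall>k\<in>{1..i}. \<forall>j<N (k-1). norm_m m (col (net X Q N (k-1)) j) \<noteq> 0) \<longrightarrow>
      (\<forall>k\<in>{1..i-1}. \<forall>j<N k. \<exists>z.
          perfect_align m (N (k-1)) (net X W N (k-1)) (net X Q N (k-1)) (col (W k) j) z \<and>
          col (Q k) j \<in> set_pmf (phase2 \<delta> z (net X Q N (k-1)) m (N (k-1)))) \<longrightarrow>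
      (\<forall>j<N i. perfect_align m (N (i-1)) (net X W N (i-1)) (net X Q N (i-1)) (col (W i) j) (wt j)) \<longrightarrow>
      measure_pmf.prob
        (mat_pmf (\<lambda>j. phase2 \<delta> (wt j) (net X Q N (i-1)) m (N (i-1))) (N i))
        {Qi. \<forall>j<N i.
           col_err m (N (i-1)) (net X W N (i-1)) (W i) (net X Q N (i-1)) Qi j
           \<le> c * (MAX j\<in>{..<N (i-1)}. norm_m m (col (net X W N (i-1)) j))
             + c * (MAX j\<in>{..<N (i-1)}.
                      col_err m (N (i-2)) (net X W N (i-2)) (W (i-1)) (net X Q N (i-2)) (Q (i-1)) j)}
      \<ge> 1 - sqrt 2 * real m * real (N i) / real (N (i-1)) ^ p)
    \<and>
    (1 \<le> r \<longrightarrow> (\<forall>Q.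
      (\<forall>k\<in>{1..i}. \<forall>j<N (k-1). norm_m m (col (net X Q N (k-1)) j) \<noteq> 0) \<longrightarrow>
      (\<forall>k\<in>{1..i-1}. \<forall>j<N k.
          col (Q k) j \<in> set_pmf (phase2 \<delta>
             (order_r_align r m (N (k-1)) (net X W N (k-1)) (net X Q N (k-1)) (col (W k) j))
             (net X Q N (k-1)) m (N (k-1)))) \<longrightarrow>
      measure_pmf.prob
        (mat_pmf (\<lambda>j. phase2 \<delta>
             (order_r_align r m (N (i-1)) (net X W N (i-1)) (net X Q N (i-1)) (col (W i) j))
             (net X Q N (i-1)) m (N (i-1))) (N i))
        {Qi. \<forall>j<N i.
           col_err m (N (i-1)) (net X W N (i-1)) (W i) (net X Q N (i-1)) Qi j
           \<le> c * (MAX j\<in>{..<N (i-1)}. norm_m m (col (net X W N (i-1)) j))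
             + (real (N (i-1)) * max_norm (N (i-1)) (N i) (W i)
                  * op_norm m (proj_prod m (net X Q N (i-1)) (N (i-1))) ^ (r - 1) + c)
               * (MAX j\<in>{..<N (i-1)}.
                      col_err m (N (i-2)) (net X W N (i-2)) (W (i-1)) (net X Q N (i-2)) (Q (i-1)) j)}
      \<ge> 1 - sqrt 2 * real m * real (N i) / real (N (i-1)) ^ p))"
proof -
  from assms(2) have i2: "2 \<le> i" .
  let ?n = "N (i-1)"
  let ?Y = "net X W N (i-1)"
  let ?Yt = "\<lambda>Q. net X Q N (i-1)"
  let ?M1 = "MAX j\<in>{..<N (i-1)}. norm_m m (col (net X W N (i-1)) j)"
  let ?M2 = "\<lambda>Q. MAX j\<in>{..<N (i-1)}. col_err m (N (i-2)) (net X W N (i-2)) (W (i-1)) (net X Q N (i-2)) (Q (i-1)) j"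
  let ?Mt = "\<lambda>Q. MAX t\<in>{..<N (i-1)}. norm_m m (col (net X Q N (i-1)) t)"
  have c0: "c \<ge> 0"
  proof (cases "?n = 0")
    case True thus ?thesis unfolding c_def by simp
  next
    case False
    hence "0 \<le> ln (real ?n)" by simp
    hence "0 \<le> 2 * pi * real p * real m * ln (real ?n)" by simp
    thus ?thesis unfolding c_def using assms(1) by simp
  qed
  have cMt: "c * ?Mt Q \<le> c * ?M1 + c * ?M2 Q" for Q
  proof (cases "?n = 0")
    case True
    hence "c = 0" unfolding c_def by simp
    thus ?thesis by simp
  next
    case False
    have "?Mt Q \<le> ?M1 + ?M2 Q"
      by (rule max_split) (use False colQ_i[OF i2] in auto)
    thus ?thesis using c0 by (simp add: distrib_left[symmetric] mult_left_mono)
  qed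
  have nzQ: "\<forall>t<?n. norm_m m (col (?Yt Q) t) \<noteq> 0"
    if "\<forall>k\<in>{1..i}. \<forall>j<N (k-1). norm_m m (col (net X Q N (k-1)) j) \<noteq> 0" for Q
    using that i2 by auto
  show ?thesis
    apply (intro conjI allI impI)
    subgoal premises prems for Q wt
    proof -
      have VE: "\<forall>j<N i. norm_m m (\<lambda>a. matvec ?Y (col (W i) j) ?n a - matvec (?Yt Q) (wt j) ?n a) \<le> 0"
      proof (intro allI impI)
        fix j assume j: "j < N i"
        have "norm_m m (\<lambda>a. matvec ?Y (col (W i) j) ?n a - matvec (?Yt Q) (wt j) ?n a) = norm_m m (\<lambda>_. 0)"
          using prems(3) j by (intro norm_cong) (auto simp: perfect_align_def)
        thus "norm_m m (\<lambda>a. matvec ?Y (col (W i) j) ?n a - matvec (?Yt Q) (wt j) ?n a) \<le> 0"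
          by (simp add: norm_m_def)
      qed
      note C = core[where \<delta>=\<delta> and m=m and n="?n" and Ni="N i" and p=p and Yt="?Yt Q"
           and V="\<lambda>j a. matvec ?Y (col (W i) j) ?n a" and wt=wt and E="\<lambda>_. 0",
           OF assms(1) nzQ[OF prems(1)] VE, folded c_def]
      show ?thesis
      proof (rule order_trans[OF C], rule measure_pmf.finite_measure_mono)
        show "{Qi. \<forall>j<N i. norm_m m (\<lambda>a. matvec ?Y (col (W i) j) ?n a - matvec (?Yt Q) (col Qi j) ?n a) \<le> 0 + c * ?Mt Q}
          \<subseteq> {Qi. \<forall>j<N i. col_err m (N (i-1)) (net X W N (i-1)) (W i) (net X Q N (i-1)) Qi j \<le> c * ?M1 + c * ?M2 Q}"
          using cMt[of Q] by (auto simp: col_err_def)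
      qed simp
    qed
    subgoal premises prems for Q
    proof -
      let ?wt = "\<lambda>j. order_r_align r m ?n ?Y (?Yt Q) (col (W i) j)"
      let ?E = "\<lambda>j. real ?n * max_norm ?n (N i) (W i) * op_norm m (proj_prod m (?Yt Q) ?n) ^ (r - 1) * ?M2 Q"
      have VE: "\<forall>j<N i. norm_m m (\<lambda>a. matvec ?Y (col (W i) j) ?n a - matvec (?Yt Q) (?wt j) ?n a) \<le> ?E j"
      proof (intro allI impI)
        fix j assume j: "j < N i"
        show "norm_m m (\<lambda>a. matvec ?Y (col (W i) j) ?n a - matvec (?Yt Q) (?wt j) ?n a) \<le> ?E j"
        proof (cases "?n = 0")
          case True
          thus ?thesis by (simp add: matvec_def norm_m_def)
        next
          case False
          show ?thesis
          proof (rule order_trans[OF order_err[where mw="max_norm ?n (N i) (W i)" and D="?M2 Q"]])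
            show "\<forall>k<?n. \<bar>col (W i) j k\<bar> \<le> max_norm ?n (N i) (W i)"
              unfolding max_norm_def col_def using j
              by (auto intro!: Max_ge rev_image_eqI)
            show "\<forall>k<?n. norm_m m (\<lambda>a. ?Y a k - ?Yt Q a k) \<le> ?M2 Q"
            proof (intro allI impI)
              fix k assume k: "k < ?n"
              have "norm_m m (\<lambda>a. ?Y a k - ?Yt Q a k)
                \<le> col_err m (N (i-2)) (net X W N (i-2)) (W (i-1)) (net X Q N (i-2)) (Q (i-1)) k"
                by (rule col_diff_i[OF i2])
              also have "\<dots> \<le> ?M2 Q" using k by (intro Max_ge) auto
              finally show "norm_m m (\<lambda>a. ?Y a k - ?Yt Q a k) \<le> ?M2 Q" .
            qed
          qed (use False nzQ[OF prems(2)] prems(1) in auto)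
        qed
      qed
      note C = core[where \<delta>=\<delta> and m=m and n="?n" and Ni="N i" and p=p and Yt="?Yt Q"
           and V="\<lambda>j a. matvec ?Y (col (W i) j) ?n a" and wt="?wt" and E="?E",
           OF assms(1) nzQ[OF prems(2)] VE, folded c_def]
      show ?thesis
      proof (rule order_trans[OF C], rule measure_pmf.finite_measure_mono)
        show "{Qi. \<forall>j<N i. norm_m m (\<lambda>a. matvec ?Y (col (W i) j) ?n a - matvec (?Yt Q) (col Qi j) ?n a) \<le> ?E j + c * ?Mt Q}
          \<subseteq> {Qi. \<forall>j<N i. col_err m (N (i-1)) (net X W N (i-1)) (W i) (net X Q N (i-1)) Qi j
              \<le> c * ?M1 + (real ?n * max_norm ?n (N i) (W i) * op_norm m (proj_prod m (?Yt Q) ?n) ^ (r - 1) + c) * ?M2 Q}"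
          using cMt[of Q] by (auto simp: col_err_def distrib_right)
      qed simp
    qed
    done
qed
end
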